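(* For any $u,v\in\mathbb{R}^d$, \[ \{\langle u, Bv\rangle : B\in \mathbb{B}^u_d\} = \{\langle u, Bv\rangle : B\in \mathbb{B}_d\} = \big[\langle u^\downarrow, v^\uparrow\rangle,\ \langle u^\downarrow, v^\downarrow\rangle\big]. \]
   Context: $\langle u,v\rangle=\sum_j u_jv_j$ for real vectors. For $u\in\mathbb{R}^d$, $u^\downarrow$ (resp. $u^\uparrow$) is the vector with the same entries rearranged in decreasing (resp. increasing) order. $\mathbb{B}_d$ is the set of $d\times d$ bistochastic (doubly stochastic) matrices: real matrices with nonnegative entries whose rows and columns each sum to $1$. $\mathbb{B}^u_d\subseteq\mathbb{B}_d$ is the set of unistochastic matrices, i.e. matrices of the form $[\,|U_{ij}|^2\,]_{i,j}$ for some $d\times d$ unitary matrix $U$. *)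

theory Defs
  imports "HOL-Analysis.Analysis" "HOL-Library.Multiset"
begin

definition bistochastic :: "real^'n^'n \<Rightarrow> bool" where
  "bistochastic B \<longleftrightarrow> (\<forall>i j. B$i$j \<ge> 0) \<and> (\<forall>i. (\<Sum>j\<in>UNIV. B$i$j) = 1) \<and> (\<forall>j. (\<Sum>i\<in>UNIV. B$i$j) = 1)"

definition conj_transpose :: "complex^'n^'n \<Rightarrow> complex^'n^'n" where
  "conj_transpose U = (\<chi> i j. cnj (U$j$i))"

definition unitary :: "complex^'n^'n \<Rightarrow> bool" where
  "unitary U \<longleftrightarrow> U ** conj_transpose U = mat 1 \<and> conj_transpose U ** U = mat 1"

definition unistochastic :: "real^'n^'n \<Rightarrow> bool" where
  "unistochastic B \<longleftrightarrow> (\<exists>U::complex^'n^'n. unitary U \<and> (\<forall>i j. B$i$j = (cmod (U$i$j))^2))"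

definition entries_up :: "real^'n \<Rightarrow> real list" where
  "entries_up u = sorted_list_of_multiset (image_mset (\<lambda>i. u$i) (mset_set (UNIV::'n set)))"

definition entries_down :: "real^'n \<Rightarrow> real list" where
  "entries_down u = rev (entries_up u)"

definition list_inner :: "real list \<Rightarrow> real list \<Rightarrow> real" where
  "list_inner xs ys = sum_list (map2 (*) xs ys)"

end

theory Submission
  imports Defs "HOL-Combinatorics.Permutations"
begin


primrec ycert :: "(nat\<Rightarrow>real) \<Rightarrow> (nat\<Rightarrow>real) \<Rightarrow> nat \<Rightarrow> real" where
  "ycert a b 0 = 0"
| "ycert a b (Suc l) = ycert a b l - a (Suc l) * (b l - b (Suc l))"

definition decr :: "nat \<Rightarrow> (nat \<Rightarrow> real) \<Rightarrow> bool" where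
  "decr n a \<longleftrightarrow> (\<forall>k l. k \<le> l \<longrightarrow> l < n \<longrightarrow> a l \<le> a k)"

lemma cert_A:
  fixes a b :: "nat \<Rightarrow> real" and n k l :: nat
  assumes da: "decr n a" and db: "decr n b"
      and kl: "k \<le> l" "l < n"
  shows "a k * (b l - b k) \<le> ycert a b l - ycert a b k"
proof -
  have "l < n \<longrightarrow> a k * (b l - b k) \<le> ycert a b l - ycert a b k"
  using kl(1)
  proof (induction l rule: dec_induct)
    case base then show ?case by simp
  next
    case (step l)
    show ?case
    proof
      assume l: "Suc l < n"
      have "a (Suc l) * (b l - b (Suc l)) \<le> a k * (b l - b (Suc l))"
        using da db step l unfolding decr_def by (intro mult_right_mono) auto
      then show "a k * (b (Suc l) - b k) \<le> ycert a b (Suc l) - ycert a b k"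
        using step l by (simp add: algebra_simps)
    qed
  qed
  then show ?thesis using kl by blast
qed

lemma cert_B:
  fixes a b :: "nat \<Rightarrow> real" and n k l :: nat
  assumes da: "decr n a" and db: "decr n b"
      and kl: "l \<le> k" "k < n"
  shows "a k * (b l - b k) \<le> ycert a b l - ycert a b k"
proof -
  have "k < n \<longrightarrow> a k * (b l - b k) \<le> ycert a b l - ycert a b k"
  using kl(1)
  proof (induction k rule: dec_induct)
    case base then show ?case by simp
  next
    case (step k)
    show ?case
    proof
      assume k: "Suc k < n"
      have "a (Suc k) * (b l - b k) \<le> a k * (b l - b k)"
        using da db step k unfolding decr_def by (intro mult_right_mono) auto
      then show "a (Suc k) * (b l - b (Suc k)) \<le> ycert a b l - ycert a b (Suc k)"
        using step k by (simp add: algebra_simps)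
    qed
  qed
  then show ?thesis using kl by blast
qed

lemma cert:
  fixes a b :: "nat \<Rightarrow> real" and n k l :: nat
  assumes ha: "decr n a" and hb: "decr n b"
      and kl: "k < n" "l < n"
  shows "a k * b l \<le> (a k * b k - ycert a b k) + ycert a b l"
proof -
  have "a k * (b l - b k) \<le> ycert a b l - ycert a b k"
  proof (cases "k \<le> l")
    case True show ?thesis by (rule cert_A[OF ha hb True kl(2)])
  next
    case False
    then have lk: "l \<le> k" by simp
    show ?thesis by (rule cert_B[OF ha hb lk kl(1)])
  qed
  then show ?thesis by (simp add: algebra_simps)
qed

definition pos :: "'a list \<Rightarrow> 'a \<Rightarrow> nat" where
  "pos e i = inv_into {..<length e} ((!) e) i"

lemma pos_facts:
  assumes "distinct e" "set e = UNIV"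
  shows "e ! pos e i = i" "pos e i < length e" "\<And>k. k < length e \<Longrightarrow> pos e (e ! k) = k"
proof -
  have bij: "bij_betw ((!) e) {..<length e} UNIV" using bij_betw_nth assms by blast
  show "e ! pos e i = i" unfolding pos_def using bij by (simp add: bij_betw_inv_into_right)
  show "pos e i < length e" unfolding pos_def using bij
    by (metis UNIV_I bij_betw_def inv_into_into lessThan_iff)
  show "\<And>k. k < length e \<Longrightarrow> pos e (e ! k) = k" unfolding pos_def using bij
    by (simp add: bij_betw_inv_into_left)
qed

lemma sum_enum:
  assumes "distinct e" "set e = (UNIV::'a::finite set)"
  shows "(\<Sum>i\<in>UNIV. g i) = (\<Sum>k<length e. g (e ! k))"
proof -
  have bij: "bij_betw ((!) e) {..<length e} UNIV" using bij_betw_nth assms by blast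
  show ?thesis using sum.reindex_bij_betw[OF bij, of g] by simp
qed

lemma list_inner_nth:
  assumes "length e1 = length e2"
  shows "list_inner (map f e1) (map g e2) = (\<Sum>k<length e1. f (e1 ! k) * g (e2 ! k))"
  using assms unfolding list_inner_def
  by (simp add: sum_list_sum_nth atLeast0LessThan)

lemma bist_row: "bistochastic B \<Longrightarrow> (\<Sum>j\<in>UNIV. B$i$j) = 1"
  and bist_col: "bistochastic B \<Longrightarrow> (\<Sum>i\<in>UNIV. B$i$j) = 1"
  and bist_nn: "bistochastic B \<Longrightarrow> B$i$j \<ge> 0"
  unfolding bistochastic_def by auto

lemma inner_mat: "u \<bullet> (B *v w) = (\<Sum>i\<in>UNIV. \<Sum>j\<in>UNIV. B$i$j * (u$i * w$j))"
  by (simp add: inner_vec_def matrix_vector_mult_def sum_distrib_left mult_ac)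

lemma upper:
  fixes u w :: "real^'n" and B :: "real^'n^'n"
  assumes B: "bistochastic B"
    and eu: "distinct eu" "set eu = UNIV" and ew: "distinct ew" "set ew = UNIV"
    and su: "sorted_wrt (\<ge>) (map (\<lambda>i. u$i) eu)"
    and sw: "sorted_wrt (\<ge>) (map (\<lambda>i. w$i) ew)"
  shows "u \<bullet> (B *v w) \<le> list_inner (map (\<lambda>i. u$i) eu) (map (\<lambda>i. w$i) ew)"
proof -
  define n where "n = length eu"
  have lw: "length ew = n" unfolding n_def using distinct_card[OF eu(1)] distinct_card[OF ew(1)] eu(2) ew(2) by simp
  define a where "a k = u $ (eu ! k)" for k
  define b where "b k = w $ (ew ! k)" for k
  have a: "decr n a" unfolding decr_def
  proof (intro allI impI)
    fix k l assume "k \<le> l" "l < n"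
    then show "a l \<le> a k"
    using su unfolding a_def n_def sorted_wrt_iff_nth_less
    by (cases "k = l") auto
  qed
  have b: "decr n b" unfolding decr_def
  proof (intro allI impI)
    fix k l assume "k \<le> l" "l < n"
    then show "b l \<le> b k"
    using sw lw unfolding b_def sorted_wrt_iff_nth_less
    by (cases "k = l") auto
  qed
  define y where "y = ycert a b"
  define X where "X i = a (pos eu i) * b (pos eu i) - y (pos eu i)" for i
  define Y where "Y j = y (pos ew j)" for j
  have ineq: "u$i * w$j \<le> X i + Y j" for i j
  proof -
    have 1: "u$i = a (pos eu i)" unfolding a_def using pos_facts(1)[OF eu] by simp
    have 2: "w$j = b (pos ew j)" unfolding b_def using pos_facts(1)[OF ew] by simp
    have "pos eu i < n" "pos ew j < n" using pos_facts(2)[OF eu] pos_facts(2)[OF ew] lw n_def by auto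
    from cert[OF a b this] show ?thesis unfolding X_def Y_def y_def 1 2 .
  qed
  have "u \<bullet> (B *v w) \<le> (\<Sum>i\<in>UNIV. \<Sum>j\<in>UNIV. B$i$j * (X i + Y j))"
    unfolding inner_mat
    by (rule sum_mono, rule sum_mono, rule mult_left_mono[OF ineq bist_nn[OF B]])
  also have "\<dots> = (\<Sum>i\<in>UNIV. X i * (\<Sum>j\<in>UNIV. B$i$j)) + (\<Sum>j\<in>UNIV. Y j * (\<Sum>i\<in>UNIV. B$i$j))"
  proof -
    have e1: "(\<Sum>i\<in>UNIV. \<Sum>j\<in>UNIV. B$i$j * (X i + Y j))
          = (\<Sum>i\<in>UNIV. X i * (\<Sum>j\<in>UNIV. B$i$j)) + (\<Sum>i\<in>UNIV. \<Sum>j\<in>UNIV. Y j * B$i$j)"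
      by (simp add: distrib_left sum.distrib sum_distrib_left mult_ac)
    have e2: "(\<Sum>i\<in>UNIV. \<Sum>j\<in>UNIV. Y j * B$i$j) = (\<Sum>j\<in>UNIV. Y j * (\<Sum>i\<in>UNIV. B$i$j))"
      by (subst sum.swap) (simp add: sum_distrib_left)
    show ?thesis unfolding e1 e2 ..
  qed
  also have "\<dots> = (\<Sum>i\<in>UNIV. X i) + (\<Sum>j\<in>UNIV. Y j)"
    using bist_row[OF B] bist_col[OF B] by simp
  also have "\<dots> = (\<Sum>k<n. X (eu ! k)) + (\<Sum>k<n. Y (ew ! k))"
    using sum_enum[OF eu, of X] sum_enum[OF ew, of Y] lw n_def by simp
  also have "\<dots> = (\<Sum>k<n. a k * b k - y k) + (\<Sum>k<n. y k)"
    unfolding X_def Y_def using pos_facts(3)[OF eu] pos_facts(3)[OF ew] lw n_def by simp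
  also have "\<dots> = (\<Sum>k<n. a k * b k)" by (simp add: sum_subtractf)
  also have "\<dots> = list_inner (map (\<lambda>i. u$i) eu) (map (\<lambda>i. w$i) ew)"
    using list_inner_nth[of eu ew] lw n_def a_def b_def by simp
  finally show ?thesis .
qed




lemma uni_bist:
  fixes B :: "real^'n^'n"
  assumes "unistochastic B" shows "bistochastic B"
proof -
  obtain U :: "complex^'n^'n" where U: "unitary U" and BU: "\<And>i j. B$i$j = (cmod (U$i$j))^2"
    using assms unfolding unistochastic_def by blast
  have r: "(\<Sum>j\<in>UNIV. B$i$j) = 1" for i
  proof -
    have "complex_of_real (\<Sum>j\<in>UNIV. B$i$j) = (\<Sum>j\<in>UNIV. U$i$j * cnj (U$i$j))"
      unfolding BU of_real_sum complex_norm_square ..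
    also have "\<dots> = (U ** conj_transpose U) $ i $ i"
      by (simp add: matrix_matrix_mult_def conj_transpose_def)
    also have "\<dots> = 1" using U unfolding unitary_def by (simp add: mat_def)
    finally show ?thesis by (metis of_real_eq_1_iff)
  qed
  have c: "(\<Sum>i\<in>UNIV. B$i$j) = 1" for j
  proof -
    have "complex_of_real (\<Sum>i\<in>UNIV. B$i$j) = (\<Sum>i\<in>UNIV. cnj (U$i$j) * U$i$j)"
      unfolding BU of_real_sum complex_norm_square by (simp add: mult.commute)
    also have "\<dots> = (conj_transpose U ** U) $ j $ j"
      by (simp add: matrix_matrix_mult_def conj_transpose_def)
    also have "\<dots> = 1" using U unfolding unitary_def by (simp add: mat_def)
    finally show ?thesis by (metis of_real_eq_1_iff)
  qed
  show ?thesis unfolding bistochastic_def using r c BU by simp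
qed

definition R :: "'n \<Rightarrow> 'n \<Rightarrow> real \<Rightarrow> real \<Rightarrow> 'n \<Rightarrow> 'n \<Rightarrow> real" where
  "R a b c s i k = (if a = b then (if i = k then 1 else 0) else
     if i = a then (if k = a then c else if k = b then s else 0)
     else if i = b then (if k = a then -s else if k = b then c else 0)
     else (if i = k then 1 else 0))"

lemma sum_split_ab:
  fixes f :: "'n::finite \<Rightarrow> real"
  assumes "a \<noteq> b"
  shows "(\<Sum>m\<in>UNIV. f m) = f a + f b + (\<Sum>m\<in>UNIV - {a,b}. f m)"
proof -
  have "(\<Sum>m\<in>UNIV. f m) = (\<Sum>m\<in>{a,b}. f m) + (\<Sum>m\<in>UNIV - {a,b}. f m)"
    by (metis add.commute finite sum.subset_diff top_greatest)
  then show ?thesis using assms by simp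
qed

lemma R_out1: "m \<notin> {a,b} \<Longrightarrow> R a b c s x m = (if x = m then 1 else 0)"
  and R_out2: "m \<notin> {a,b} \<Longrightarrow> R a b c s m x = (if m = x then 1 else 0)"
  unfolding R_def by auto

lemma delta_prod: assumes "finite S" shows "(\<Sum>m\<in>S. (if x = m then 1 else 0) * (if y = m then 1 else (0::real)))
   = (if x = y \<and> x \<in> S then 1 else 0)"
proof -
  have "(\<Sum>m\<in>S. (if x = m then 1 else 0) * (if y = m then 1 else (0::real)))
      = (\<Sum>m\<in>S. if m = x then (if x = y then 1 else 0) else 0)"
    by (intro sum.cong) auto
  then show ?thesis using assms by (simp add: sum.delta)
qed

lemma R_rows:
  fixes a b :: "'n::finite"
  assumes cs: "c * c + s * s = 1"
  shows "(\<Sum>m\<in>UNIV. R a b c s i m * R a b c s k m) = (if i = k then 1 else 0)"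
proof (cases "a = b")
  case True then show ?thesis unfolding R_def using delta_prod[where S=UNIV and x=i and y=k] by simp
next
  case False
  have rest: "(\<Sum>m\<in>UNIV - {a,b}. R a b c s i m * R a b c s k m) = (if i = k \<and> i \<notin> {a,b} then 1 else 0)"
  proof -
    have "(\<Sum>m\<in>UNIV - {a,b}. R a b c s i m * R a b c s k m)
        = (\<Sum>m\<in>UNIV - {a,b}. (if i = m then 1 else 0) * (if k = m then 1 else (0::real)))"
      by (intro sum.cong) (auto simp: R_out1)
    then show ?thesis by (simp add: delta_prod)
  qed
  show ?thesis unfolding sum_split_ab[OF False] rest using False cs
    by (auto simp: R_def algebra_simps)
qed

lemma R_cols:
  fixes a b :: "'n::finite"
  assumes cs: "c * c + s * s = 1"
  shows "(\<Sum>m\<in>UNIV. R a b c s m i * R a b c s m k) = (if i = k then 1 else 0)"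
proof (cases "a = b")
  case True then show ?thesis unfolding R_def using delta_prod[where S=UNIV and x=i and y=k] by (simp add: eq_commute)
next
  case False
  have rest: "(\<Sum>m\<in>UNIV - {a,b}. R a b c s m i * R a b c s m k) = (if i = k \<and> i \<notin> {a,b} then 1 else 0)"
  proof -
    have "(\<Sum>m\<in>UNIV - {a,b}. R a b c s m i * R a b c s m k)
        = (\<Sum>m\<in>UNIV - {a,b}. (if i = m then 1 else 0) * (if k = m then 1 else (0::real)))"
      by (intro sum.cong) (auto simp: R_out2)
    then show ?thesis by (simp add: delta_prod)
  qed
  show ?thesis unfolding sum_split_ab[OF False] rest using False cs
    by (auto simp: R_def algebra_simps)
qed

lemma R_sq:
  assumes "0 \<le> t" "t \<le> 1"
  shows "(R a b (sqrt (1-t)) (sqrt t) i k)^2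
     = (1-t) * (if k = i then 1 else 0) + t * (if k = Transposition.transpose a b i then 1 else 0)"
  using assms unfolding R_def by (auto simp: Transposition.transpose_def)




lemma uni_comb:
  fixes \<sigma> :: "'n::finite \<Rightarrow> 'n"
  assumes \<sigma>: "\<sigma> permutes UNIV" and t: "0 \<le> t" "t \<le> 1"
  shows "unistochastic ((\<chi> i j. (1-t) * (if j = \<sigma> i then 1 else 0)
            + t * (if j = \<sigma> (Transposition.transpose a b i) then 1 else 0)) :: real^'n^'n)"
proof -
  define c where "c = sqrt (1-t)"
  define s where "s = sqrt t"
  have cs: "c * c + s * s = 1" using t by (simp add: c_def s_def)
  define U :: "complex^'n^'n" where "U = (\<chi> i j. complex_of_real (R a b c s i (inv \<sigma> j)))"
  have iv: "inv \<sigma> permutes UNIV" using permutes_inv[OF \<sigma>] .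
  have e1: "(U ** conj_transpose U)$i$k = of_real (\<Sum>m\<in>UNIV. R a b c s i m * R a b c s k m)" for i k
  proof -
    have "(U ** conj_transpose U)$i$k = (\<Sum>j\<in>UNIV. of_real ((\<lambda>m. R a b c s i m * R a b c s k m) (inv \<sigma> j)))"
      by (simp add: matrix_matrix_mult_def conj_transpose_def U_def)
    also have "\<dots> = of_real (\<Sum>j\<in>UNIV. ((\<lambda>m. R a b c s i m * R a b c s k m) \<circ> inv \<sigma>) j)"
      by (simp add: of_real_sum)
    also have "\<dots> = of_real (\<Sum>m\<in>UNIV. R a b c s i m * R a b c s k m)"
      using sum.permute[OF iv, of "\<lambda>m. R a b c s i m * R a b c s k m"] by simp
    finally show ?thesis .
  qed
  have e2: "(conj_transpose U ** U)$i$k = of_real (\<Sum>m\<in>UNIV. R a b c s m (inv \<sigma> i) * R a b c s m (inv \<sigma> k))" for i k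
    by (simp add: matrix_matrix_mult_def conj_transpose_def U_def of_real_sum)
  have un: "unitary U"
    unfolding unitary_def
  proof
    show "U ** conj_transpose U = mat 1"
      by (simp add: vec_eq_iff e1 R_rows[OF cs] mat_def)
    show "conj_transpose U ** U = mat 1"
      using permutes_inv_eq[OF \<sigma>] permutes_inverses[OF \<sigma>]
      by (simp add: vec_eq_iff e2 R_cols[OF cs] mat_def)
  qed
  show ?thesis unfolding unistochastic_def
  proof (intro exI conjI allI)
    show "unitary U" by (rule un)
    fix i j
    have "(cmod (U$i$j))^2 = (R a b c s i (inv \<sigma> j))^2" by (simp add: U_def)
    also have "\<dots> = (1-t) * (if inv \<sigma> j = i then 1 else 0) + t * (if inv \<sigma> j = Transposition.transpose a b i then 1 else 0)"
      unfolding c_def s_def using R_sq[OF t] .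
    also have "\<dots> = (1-t) * (if j = \<sigma> i then 1 else 0) + t * (if j = \<sigma> (Transposition.transpose a b i) then 1 else 0)"
      using permutes_inv_eq[OF \<sigma>] by auto
    finally show "(\<chi> i j. (1-t) * (if j = \<sigma> i then 1 else 0)
            + t * (if j = \<sigma> (Transposition.transpose a b i) then 1 else 0)) $ i $ j = (cmod (U$i$j))^2"
      by simp
  qed
qed




definition pval :: "real^'n \<Rightarrow> real^'n \<Rightarrow> ('n \<Rightarrow> 'n) \<Rightarrow> real" where
  "pval u v \<sigma> = (\<Sum>i\<in>UNIV. u$i * v$(\<sigma> i))"

lemma val_comb:
  fixes u v :: "real^'n"
  shows "u \<bullet> ((\<chi> i j. (1-t) * (if j = \<sigma> i then 1 else 0)
            + t * (if j = \<sigma> (Transposition.transpose a b i) then 1 else 0)) *v v)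
     = (1-t) * pval u v \<sigma> + t * pval u v (\<sigma> \<circ> Transposition.transpose a b)"
proof -
  have r: "((\<chi> i j. (1-t) * (if j = \<sigma> i then 1 else 0)
            + t * (if j = \<sigma> (Transposition.transpose a b i) then 1 else 0)) *v v) $ i
        = (1-t) * v$(\<sigma> i) + t * v$(\<sigma> (Transposition.transpose a b i))" for i
  proof -
    have "((\<chi> i j. (1-t) * (if j = \<sigma> i then 1 else 0)
            + t * (if j = \<sigma> (Transposition.transpose a b i) then 1 else 0)) *v v) $ i
        = (\<Sum>j\<in>UNIV. (if j = \<sigma> i then (1-t) * v$j else 0) + (if j = \<sigma> (Transposition.transpose a b i) then t * v$j else 0))"
      unfolding matrix_vector_mult_def vec_lambda_beta by (intro sum.cong) (auto simp: algebra_simps)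
    also have "\<dots> = (1-t) * v$(\<sigma> i) + t * v$(\<sigma> (Transposition.transpose a b i))"
      by (simp add: sum.distrib sum.delta')
    finally show ?thesis .
  qed
  show ?thesis unfolding inner_vec_def r pval_def
    by (simp add: algebra_simps sum.distrib sum_distrib_left sum_subtractf)
qed

abbreviation US :: "real^'n \<Rightarrow> real^'n \<Rightarrow> real set" where
  "US u v \<equiv> {u \<bullet> (B *v v) | B. unistochastic B}"

lemma seg:
  fixes u v :: "real^'n" and \<sigma> :: "'n \<Rightarrow> 'n"
  assumes \<sigma>: "\<sigma> permutes UNIV"
  shows "closed_segment (pval u v \<sigma>) (pval u v (\<sigma> \<circ> Transposition.transpose a b)) \<subseteq> US u v"
proof
  fix x assume "x \<in> closed_segment (pval u v \<sigma>) (pval u v (\<sigma> \<circ> Transposition.transpose a b))"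
  then obtain t where t: "0 \<le> t" "t \<le> 1"
    and x: "x = (1-t) * pval u v \<sigma> + t * pval u v (\<sigma> \<circ> Transposition.transpose a b)"
    unfolding closed_segment_def by auto
  show "x \<in> US u v"
    using uni_comb[OF \<sigma> t, of a b] val_comb[of u t \<sigma> a b v] x by force
qed

lemma seg_union:
  fixes x y z :: real
  shows "closed_segment x z \<subseteq> closed_segment x y \<union> closed_segment y z"
  unfolding closed_segment_eq_real_ivl by auto

lemma chain:
  fixes u v :: "real^'n"
  assumes p: "p permutes (UNIV :: 'n set)"
  shows "\<forall>\<sigma>. \<sigma> permutes UNIV \<longrightarrow> closed_segment (pval u v \<sigma>) (pval u v (\<sigma> \<circ> p)) \<subseteq> US u v"
  using p finite_class.finite_UNIV
proof (induction p rule: permutes_induct)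
  case id
  show ?case
  proof (intro allI impI)
    fix \<sigma> :: "'n \<Rightarrow> 'n" assume \<sigma>: "\<sigma> permutes UNIV"
    obtain a :: 'n where True by simp
    show "closed_segment (pval u v \<sigma>) (pval u v (\<sigma> \<circ> id)) \<subseteq> US u v"
      using seg[OF \<sigma>, of u v a a] by simp
  qed
next
  case (swap a b p)
  show ?case
  proof (intro allI impI)
    fix \<sigma> :: "'n \<Rightarrow> 'n" assume \<sigma>: "\<sigma> permutes UNIV"
    have \<sigma>T: "\<sigma> \<circ> Transposition.transpose a b permutes UNIV"
      by (rule permutes_compose[OF permutes_swap_id \<sigma>]) auto
    have 1: "closed_segment (pval u v \<sigma>) (pval u v (\<sigma> \<circ> Transposition.transpose a b)) \<subseteq> US u v"
      by (rule seg[OF \<sigma>])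
    have 2: "closed_segment (pval u v (\<sigma> \<circ> Transposition.transpose a b)) (pval u v (\<sigma> \<circ> (Transposition.transpose a b \<circ> p))) \<subseteq> US u v"
    proof -
      have IH': "closed_segment (pval u v (\<sigma> \<circ> Transposition.transpose a b)) (pval u v ((\<sigma> \<circ> Transposition.transpose a b) \<circ> p)) \<subseteq> US u v"
        using swap.IH \<sigma>T by blast
      then show ?thesis by (simp only: o_assoc)
    qed
    show "closed_segment (pval u v \<sigma>) (pval u v (\<sigma> \<circ> (Transposition.transpose a b \<circ> p))) \<subseteq> US u v"
      using seg_union 1 2 by blast
  qed
qed




lemma obtain_enum:
  fixes f :: "real^'n"
  obtains e where "distinct e" "set e = UNIV" "entries_up f = map (\<lambda>i. f$i) e"
proof -
  obtain e0 :: "'n list" where e0: "set e0 = UNIV" "distinct e0"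
    using finite_distinct_list[OF finite_class.finite_UNIV] by blast
  have "mset (entries_up f) = mset (map (\<lambda>i. f$i) e0)"
    unfolding entries_up_def using e0 by (simp add: mset_set_set[OF e0(2), symmetric])
  then obtain p where p: "p permutes {..<length (map (\<lambda>i. f$i) e0)}"
    and pe: "permute_list p (map (\<lambda>i. f$i) e0) = entries_up f"
    by (rule mset_eq_permutation)
  have p': "p permutes {..<length e0}" using p by simp
  show ?thesis
  proof (rule that[of "permute_list p e0"])
    show "distinct (permute_list p e0)" using p' e0 by simp
    show "set (permute_list p e0) = UNIV" using p' e0 by simp
    show "entries_up f = map (($) f) (permute_list p e0)"
      by (simp only: pe[symmetric] permute_list_map[OF p'])
  qed
qed

lemma perm_of_enum:
  fixes eu e :: "'n::finite list"
  assumes eu: "distinct eu" "set eu = UNIV" and e: "distinct e" "set e = UNIV"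
  shows "(\<lambda>i. e ! pos eu i) permutes UNIV"
proof -
  have le: "length e = length eu" using distinct_card[OF eu(1)] distinct_card[OF e(1)] eu(2) e(2) by simp
  have inj: "inj (\<lambda>i. e ! pos eu i)"
  proof
    fix x y assume "e ! pos eu x = e ! pos eu y"
    moreover have "pos eu x < length e" "pos eu y < length e"
      using pos_facts(2)[OF eu, of x] pos_facts(2)[OF eu, of y] le by simp_all
    ultimately have "pos eu x = pos eu y"
      using nth_eq_iff_index_eq[OF e(1), of "pos eu x" "pos eu y"] by simp
    then have "eu ! pos eu x = eu ! pos eu y" by simp
    then show "x = y" unfolding pos_facts(1)[OF eu] .
  qed
  have "surj (\<lambda>i. e ! pos eu i)" by (rule finite_UNIV_inj_surj[OF _ inj]) simp
  with inj have "bij (\<lambda>i. e ! pos eu i)" unfolding bij_def by simp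
  then show ?thesis by (rule bij_imp_permutes) simp
qed

lemma pval_enum:
  fixes u v :: "real^'n" and eu e :: "'n list"
  assumes eu: "distinct eu" "set eu = UNIV" and e: "distinct e" "set e = UNIV"
  shows "pval u v (\<lambda>i. e ! pos eu i) = list_inner (map (\<lambda>i. u$i) eu) (map (\<lambda>i. v$i) e)"
proof -
  have le: "length e = length eu" using distinct_card[OF eu(1)] distinct_card[OF e(1)] eu(2) e(2) by simp
  have "pval u v (\<lambda>i. e ! pos eu i) = (\<Sum>k<length eu. u$(eu!k) * v$(e ! pos eu (eu!k)))"
    unfolding pval_def by (rule sum_enum[OF eu])
  also have "\<dots> = (\<Sum>k<length eu. u$(eu!k) * v$(e ! k))"
    using pos_facts(3)[OF eu] by simp
  also have "\<dots> = list_inner (map (\<lambda>i. u$i) eu) (map (\<lambda>i. v$i) e)"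
  proof -
    have le': "length eu = length e" using le by simp
    show ?thesis by (simp only: list_inner_nth[OF le'])
  qed
  finally show ?thesis .
qed

theorem mainTheorem3:
  fixes u v :: "real^'n"
  shows "{u \<bullet> (B *v v) | B. unistochastic B} = {u \<bullet> (B *v v) | B. bistochastic B}
       \<and> {u \<bullet> (B *v v) | B. bistochastic B}
           = {list_inner (entries_down u) (entries_up v) .. list_inner (entries_down u) (entries_down v)}"
proof -
  obtain eu0 where eu0: "distinct eu0" "set eu0 = UNIV" "entries_up u = map (\<lambda>i. u$i) eu0"
    by (rule obtain_enum)
  obtain ev0 where ev0: "distinct ev0" "set ev0 = UNIV" "entries_up v = map (\<lambda>i. v$i) ev0"
    by (rule obtain_enum)
  define eu where "eu = rev eu0"
  define ev where "ev = rev ev0"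
  have eu: "distinct eu" "set eu = UNIV" using eu0 unfolding eu_def by auto
  have ev: "distinct ev" "set ev = UNIV" using ev0 unfolding ev_def by auto
  have du: "entries_down u = map (\<lambda>i. u$i) eu" unfolding entries_down_def eu_def eu0(3) by (simp add: rev_map)
  have dv: "entries_down v = map (\<lambda>i. v$i) ev" unfolding entries_down_def ev_def ev0(3) by (simp add: rev_map)
  have su: "sorted_wrt (\<ge>) (map (\<lambda>i. u$i) eu)"
    using sorted_sorted_list_of_multiset unfolding eu_def rev_map[symmetric] eu0(3)[symmetric] entries_up_def
      sorted_wrt_rev by (simp add: sorted_wrt_iff_nth_less sorted_iff_nth_mono_less)
  have sv: "sorted_wrt (\<ge>) (map (\<lambda>i. v$i) ev)"
    using sorted_sorted_list_of_multiset unfolding ev_def rev_map[symmetric] ev0(3)[symmetric] entries_up_def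
      sorted_wrt_rev by (simp add: sorted_wrt_iff_nth_less sorted_iff_nth_mono_less)
  have sv0: "sorted_wrt (\<ge>) (map (\<lambda>i. (-v)$i) ev0)"
  proof -
    have "sorted (map (\<lambda>i. v$i) ev0)" using ev0(3) unfolding entries_up_def
      by (metis sorted_sorted_list_of_multiset)
    then show ?thesis by (simp add: sorted_wrt_iff_nth_less sorted_iff_nth_mono_less)
  qed
  define M where "M = list_inner (entries_down u) (entries_down v)"
  define m where "m = list_inner (entries_down u) (entries_up v)"
  have lens: "length ev0 = length eu" using distinct_card[OF eu(1)] distinct_card[OF ev0(1)] eu(2) ev0(2) by simp
  have BS: "{u \<bullet> (B *v v) | B. bistochastic B} \<subseteq> {m..M}"
  proof
    fix x assume "x \<in> {u \<bullet> (B *v v) | B. bistochastic B}"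
    then obtain B where B: "bistochastic B" and x: "x = u \<bullet> (B *v v)" by blast
    have up: "x \<le> M" unfolding x M_def du dv by (rule upper[OF B eu ev su sv])
    have "u \<bullet> (B *v (-v)) \<le> list_inner (map (\<lambda>i. u$i) eu) (map (\<lambda>i. (-v)$i) ev0)"
      by (rule upper[OF B eu ev0(1,2) su sv0])
    moreover have "list_inner (map (\<lambda>i. u$i) eu) (map (\<lambda>i. (-v)$i) ev0) = - m"
    proof -
      have l2: "length eu = length ev0" using lens by simp
      have "list_inner (map (\<lambda>i. u$i) eu) (map (\<lambda>i. (-v)$i) ev0)
          = (\<Sum>k<length eu. u$(eu!k) * (-v)$(ev0!k))" by (rule list_inner_nth[OF l2])
      also have "\<dots> = - (\<Sum>k<length eu. u$(eu!k) * v$(ev0!k))" by (simp add: sum_negf)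
      also have "(\<Sum>k<length eu. u$(eu!k) * v$(ev0!k)) = m"
        unfolding m_def du ev0(3) by (rule list_inner_nth[OF l2, symmetric])
      finally show ?thesis .
    qed
    moreover have "u \<bullet> (B *v (-v)) = - (u \<bullet> (B *v v))"
      unfolding inner_mat by (simp add: sum_negf)
    ultimately have "m \<le> x" unfolding x by simp
    with up show "x \<in> {m..M}" by simp
  qed
  have US_BS: "{u \<bullet> (B *v v) | B. unistochastic B} \<subseteq> {u \<bullet> (B *v v) | B. bistochastic B}"
    using uni_bist by blast
  define smax where "smax = (\<lambda>i. ev ! pos eu i)"
  define smin where "smin = (\<lambda>i. ev0 ! pos eu i)"
  have pmax: "smax permutes UNIV" unfolding smax_def by (rule perm_of_enum[OF eu ev])
  have pmin: "smin permutes UNIV" unfolding smin_def by (rule perm_of_enum[OF eu ev0(1,2)])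
  have vmax: "pval u v smax = M" unfolding smax_def M_def du dv by (rule pval_enum[OF eu ev])
  have vmin: "pval u v smin = m" unfolding smin_def m_def du ev0(3) by (rule pval_enum[OF eu ev0(1,2)])
  define p where "p = inv smax \<circ> smin"
  have pp: "p permutes UNIV" unfolding p_def by (rule permutes_compose[OF pmin permutes_inv[OF pmax]])
  have "smax \<circ> p = smin" unfolding p_def using permutes_inverses[OF pmax] by (auto simp: fun_eq_iff)
  then have "closed_segment M m \<subseteq> US u v"
    using chain[OF pp, of u v] pmax vmax vmin by auto
  moreover have "{m..M} \<subseteq> closed_segment M m" unfolding closed_segment_eq_real_ivl by auto
  ultimately have I_US: "{m..M} \<subseteq> {u \<bullet> (B *v v) | B. unistochastic B}" by blast
  have e2: "{u \<bullet> (B *v v) | B. bistochastic B} = {m..M}"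
    by (rule subset_antisym[OF BS subset_trans[OF I_US US_BS]])
  have e1: "{u \<bullet> (B *v v) | B. unistochastic B} = {u \<bullet> (B *v v) | B. bistochastic B}"
    by (rule subset_antisym[OF US_BS subset_trans[OF BS I_US]])
  show ?thesis by (rule conjI[OF e1 e2[unfolded M_def m_def]])
qed


end
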